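(* Let $(\mathcal E,\langle\,,\rangle,D,\psi)$ be a coherent tangent bundle on $M^2$, $p$ a peak, and $\gamma\colon[0,\varepsilon)\to M^2$ a singular curve with $\gamma(0)=p$ such that $\gamma(t)$ is an $A_2$-point for each $t>0$. Then the singular curvature measure $\kappa_s\,d\tau$ is continuous on $[0,\varepsilon)$; that is, writing $\kappa_s\,d\tau=\kappa_s(t)\,|\psi(\dot\gamma(t))|\,dt$ for $t>0$, the density $\kappa_s(t)\,|\psi(\dot\gamma(t))|$ extends continuously (in particular is bounded) up to $t=0$. Here $d\tau$ is the arclength measure of $\gamma$ with respect to $ds^2=\psi^*\langle\,,\rangle$.
   Context: A coherent tangent bundle over an oriented $2$-manifold $M^2$ is a tuple $(\mathcal E,\langle\,,\rangle,D,\psi)$: $\mathcal E$ an orientable rank-$2$ vector bundle with fiber metric $\langle\,,\rangle$ and metric connection $D$, $\psi\colon TM^2\to\mathcal E$ a bundle homomorphism with $D_X\psi(Y)-D_Y\psi(X)=\psi([X,Y])$. Fix a co-orientation $\mu$ (a section of $\mathcal E^*\wedge\mathcal E^*$ with $\mu(e_1,e_2)=\pm1$ on orthonormal frames). Singular points: $\psi_p$ not bijective; $\Sigma$ singular set; on a positively oriented chart, $\lambda=\mu(\psi(\partial_u),\psi(\partial_v))$. Non-degenerate singular point: $d\lambda\neq0$; then $\Sigma$ is locally a regular curve and the null direction $\ker\psi_p$ is one-dimensional. $A_2$-point: non-degenerate with null direction transversal to the singular curve. Peak: a singular non-$A_2$ point $p$ with a neighborhood $U$ such that $\Sigma\cap(U\setminus\{p\})$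 consists of $A_2$-points, $\operatorname{rank}\psi_p=1$, and $\Sigma\cap U$ is a finite (possibly empty) union of $C^1$-regular curves starting from $p$. Singular curvature along a singular curve $\gamma(t)$ of $A_2$-points: with $\eta(t)$ a nonvanishing null vector field along $\gamma$ such that $\{\dot\gamma,\eta\}$ is positively oriented, $\kappa_s=\operatorname{sgn}(d\lambda(\eta))\,\mu(\psi(\dot\gamma),D_t\psi(\dot\gamma))/|\psi(\dot\gamma)|^3$. *)

theory Defs
  imports "HOL-Analysis.Analysis"
begin

text \<open>Local model: the surface is (an open subset U of) the oriented plane with
coordinates (u,v); the bundle E is trivialised by a positively oriented orthonormal
frame, so fibres are real \<times> real with the standard metric.  A metric connection is
then D_X s = X(s) + omega(X) J s, J the rotation by +90 degrees, omega = w1 du + w2 dv.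
The homomorphism psi is given by psiU = psi(d/du), psiV = psi(d/dv).\<close>

type_synonym pt = "real \<times> real"

fun Ck :: "nat \<Rightarrow> ('a::real_normed_vector \<Rightarrow> 'b::real_normed_vector) \<Rightarrow> 'a set \<Rightarrow> bool" where
  "Ck 0 f S = continuous_on S f"
| "Ck (Suc k) f S = (f differentiable_on S \<and> (\<forall>v. Ck k (\<lambda>x. frechet_derivative f (at x) v) S))"

definition smooth_on :: "('a::real_normed_vector \<Rightarrow> 'b::real_normed_vector) \<Rightarrow> 'a set \<Rightarrow> bool" where
  "smooth_on f S \<longleftrightarrow> (\<forall>k. Ck k f S)"

definition mu :: "pt \<Rightarrow> pt \<Rightarrow> real" where
  "mu a b = fst a * snd b - snd a * fst b"

definition Jrot :: "pt \<Rightarrow> pt" where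
  "Jrot a = (- snd a, fst a)"

definition pd_u :: "(pt \<Rightarrow> 'b::real_normed_vector) \<Rightarrow> pt \<Rightarrow> 'b" where
  "pd_u f x = frechet_derivative f (at x) (1, 0)"

definition pd_v :: "(pt \<Rightarrow> 'b::real_normed_vector) \<Rightarrow> pt \<Rightarrow> 'b" where
  "pd_v f x = frechet_derivative f (at x) (0, 1)"

text \<open>Coherent tangent bundle data (smooth) with the compatibility condition
D_u psi(d/dv) - D_v psi(d/du) = psi([d/du,d/dv]) = 0.\<close>
definition coherent_tb :: "pt set \<Rightarrow> (pt \<Rightarrow> pt) \<Rightarrow> (pt \<Rightarrow> pt) \<Rightarrow> (pt \<Rightarrow> real) \<Rightarrow> (pt \<Rightarrow> real) \<Rightarrow> bool" where
  "coherent_tb U psiU psiV w1 w2 \<longleftrightarrow> open U \<and>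
     smooth_on psiU U \<and> smooth_on psiV U \<and> smooth_on w1 U \<and> smooth_on w2 U \<and>
     (\<forall>x\<in>U. pd_u psiV x + w1 x *\<^sub>R Jrot (psiV x) = pd_v psiU x + w2 x *\<^sub>R Jrot (psiU x))"

definition psi :: "(pt \<Rightarrow> pt) \<Rightarrow> (pt \<Rightarrow> pt) \<Rightarrow> pt \<Rightarrow> pt \<Rightarrow> pt" where
  "psi psiU psiV x X = fst X *\<^sub>R psiU x + snd X *\<^sub>R psiV x"

definition lam :: "(pt \<Rightarrow> pt) \<Rightarrow> (pt \<Rightarrow> pt) \<Rightarrow> pt \<Rightarrow> real" where
  "lam psiU psiV x = mu (psiU x) (psiV x)"

definition dlam :: "(pt \<Rightarrow> pt) \<Rightarrow> (pt \<Rightarrow> pt) \<Rightarrow> pt \<Rightarrow> pt \<Rightarrow> real" where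
  "dlam psiU psiV x = frechet_derivative (lam psiU psiV) (at x)"

definition sing_set :: "pt set \<Rightarrow> (pt \<Rightarrow> pt) \<Rightarrow> (pt \<Rightarrow> pt) \<Rightarrow> pt set" where
  "sing_set U psiU psiV = {x\<in>U. \<not> bij (psi psiU psiV x)}"

definition nondegenerate :: "pt set \<Rightarrow> (pt \<Rightarrow> pt) \<Rightarrow> (pt \<Rightarrow> pt) \<Rightarrow> pt \<Rightarrow> bool" where
  "nondegenerate U psiU psiV x \<longleftrightarrow> x \<in> sing_set U psiU psiV \<and> (\<exists>X. dlam psiU psiV x X \<noteq> 0)"

text \<open>A2-point: nondegenerate, and the null direction ker psi_x is transversal to
the singular curve, whose tangent line at x is ker d lambda_x.\<close>
definition A2_point :: "pt set \<Rightarrow> (pt \<Rightarrow> pt) \<Rightarrow> (pt \<Rightarrow> pt) \<Rightarrow> pt \<Rightarrow> bool" where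
  "A2_point U psiU psiV x \<longleftrightarrow> nondegenerate U psiU psiV x \<and>
     (\<forall>X. psi psiU psiV x X = 0 \<and> dlam psiU psiV x X = 0 \<longrightarrow> X = 0)"

definition C1_regular_curve :: "(real \<Rightarrow> pt) \<Rightarrow> real \<Rightarrow> bool" where
  "C1_regular_curve c d \<longleftrightarrow> 0 < d \<and>
     (\<exists>c'. (\<forall>t\<in>{0..<d}. (c has_vector_derivative c' t) (at t within {0..<d})) \<and>
           continuous_on {0..<d} c' \<and> (\<forall>t\<in>{0..<d}. c' t \<noteq> 0))"

definition is_peak :: "pt set \<Rightarrow> (pt \<Rightarrow> pt) \<Rightarrow> (pt \<Rightarrow> pt) \<Rightarrow> pt \<Rightarrow> bool" where
  "is_peak U psiU psiV p \<longleftrightarrow> p \<in> sing_set U psiU psiV \<and> \<not> A2_point U psiU psiV p \<and>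
     dim (range (psi psiU psiV p)) = 1 \<and>
     (\<exists>V. open V \<and> p \<in> V \<and> V \<subseteq> U \<and>
        (\<forall>x \<in> sing_set U psiU psiV \<inter> V - {p}. A2_point U psiU psiV x) \<and>
        (\<exists>C :: ((real \<Rightarrow> pt) \<times> real) set. finite C \<and>
           (\<forall>(c, d) \<in> C. C1_regular_curve c d \<and> c 0 = p) \<and>
           sing_set U psiU psiV \<inter> V = {p} \<union> (\<Union>(c, d) \<in> C. c ` {0..<d})))"

definition psi_dot :: "(pt \<Rightarrow> pt) \<Rightarrow> (pt \<Rightarrow> pt) \<Rightarrow> (real \<Rightarrow> pt) \<Rightarrow> real \<Rightarrow> pt" where
  "psi_dot psiU psiV g t = psi psiU psiV (g t) (vector_derivative g (at t))"

definition Dt_psi_dot :: "(pt \<Rightarrow> pt) \<Rightarrow> (pt \<Rightarrow> pt) \<Rightarrow> (pt \<Rightarrow> real) \<Rightarrow> (pt \<Rightarrow> real) \<Rightarrow> (real \<Rightarrow> pt) \<Rightarrow> real \<Rightarrow> pt" where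
  "Dt_psi_dot psiU psiV w1 w2 g t =
     vector_derivative (psi_dot psiU psiV g) (at t) +
     (fst (vector_derivative g (at t)) * w1 (g t) + snd (vector_derivative g (at t)) * w2 (g t))
       *\<^sub>R Jrot (psi_dot psiU psiV g t)"

text \<open>singular curvature, eta a null vector with {gamma', eta} positively oriented\<close>
definition kappa_s :: "(pt \<Rightarrow> pt) \<Rightarrow> (pt \<Rightarrow> pt) \<Rightarrow> (pt \<Rightarrow> real) \<Rightarrow> (pt \<Rightarrow> real) \<Rightarrow> (real \<Rightarrow> pt) \<Rightarrow> (real \<Rightarrow> pt) \<Rightarrow> real \<Rightarrow> real" where
  "kappa_s psiU psiV w1 w2 g eta t =
     sgn (dlam psiU psiV (g t) (eta t)) *
     mu (psi_dot psiU psiV g t) (Dt_psi_dot psiU psiV w1 w2 g t) / norm (psi_dot psiU psiV g t) ^ 3"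

end

theory Submission
  imports Defs
begin


lemma mu_bil: "bounded_bilinear mu"
proof
  fix a a' b b' :: pt and r :: real
  show "mu (a + a') b = mu a b + mu a' b" by (simp add: mu_def algebra_simps)
  show "mu a (b + b') = mu a b + mu a b'" by (simp add: mu_def algebra_simps)
  show "mu (r *\<^sub>R a) b = r *\<^sub>R mu a b" by (simp add: mu_def algebra_simps)
  show "mu a (r *\<^sub>R b) = r *\<^sub>R mu a b" by (simp add: mu_def algebra_simps)
next
  show "\<exists>K. \<forall>a b. norm (mu a b) \<le> norm a * norm b * K"
  proof (intro exI allI)
    fix a b :: pt
    have f1: "\<bar>fst a\<bar> \<le> norm a" "\<bar>snd a\<bar> \<le> norm a" "\<bar>fst b\<bar> \<le> norm b" "\<bar>snd b\<bar> \<le> norm b"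
      by (metis norm_fst_le prod.collapse real_norm_def, metis norm_snd_le prod.collapse real_norm_def,
          metis norm_fst_le prod.collapse real_norm_def, metis norm_snd_le prod.collapse real_norm_def)
    have "\<bar>fst a * snd b\<bar> \<le> norm a * norm b" using f1 by (simp add: abs_mult mult_mono)
    moreover have "\<bar>snd a * fst b\<bar> \<le> norm a * norm b" using f1 by (simp add: abs_mult mult_mono)
    ultimately show "norm (mu a b) \<le> norm a * norm b * 2" unfolding mu_def by simp
  qed
qed

lemma bij_of_mu:
  assumes "mu (psiU x) (psiV x) \<noteq> 0"
  shows "bij (psi psiU psiV x)"
proof -
  obtain a1 a2 where a: "psiU x = (a1, a2)" by fastforce
  obtain b1 b2 where b: "psiV x = (b1, b2)" by fastforce
  have d: "a1 * b2 - a2 * b1 \<noteq> 0" using assms a b by (simp add: mu_def)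
  have pe: "psi psiU psiV x X = (fst X * a1 + snd X * b1, fst X * a2 + snd X * b2)" for X
    by (simp add: psi_def a b)
  show ?thesis
  proof (rule bijI)
    show "inj (psi psiU psiV x)"
    proof (rule injI)
      fix X Y assume "psi psiU psiV x X = psi psiU psiV x Y"
      then have e1: "(fst X - fst Y) * a1 + (snd X - snd Y) * b1 = 0"
        and e2: "(fst X - fst Y) * a2 + (snd X - snd Y) * b2 = 0"
        by (simp_all add: pe algebra_simps)
      have "(fst X - fst Y) * (a1 * b2 - a2 * b1) = 0"
        using arg_cong[OF e1, of "\<lambda>z. z * b2"] arg_cong[OF e2, of "\<lambda>z. z * b1"]
        by (simp add: algebra_simps)
      moreover have "(snd X - snd Y) * (a1 * b2 - a2 * b1) = 0"
        using arg_cong[OF e1, of "\<lambda>z. z * a2"] arg_cong[OF e2, of "\<lambda>z. z * a1"]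
        by (simp add: algebra_simps)
      ultimately show "X = Y" using d by (simp add: prod_eq_iff)
    qed
  next
    show "surj (psi psiU psiV x)"
    proof (rule surjI)
      fix y :: pt
      let ?d = "a1 * b2 - a2 * b1"
      show "psi psiU psiV x ((fst y * b2 - snd y * b1) / ?d, (a1 * snd y - a2 * fst y) / ?d) = y"
      proof -
        have "(fst y * b2 - snd y * b1) / ?d * a1 + (a1 * snd y - a2 * fst y) / ?d * b1 = fst y"
          using d by (simp add: divide_simps) (simp add: algebra_simps)
        moreover have "(fst y * b2 - snd y * b1) / ?d * a2 + (a1 * snd y - a2 * fst y) / ?d * b2 = snd y"
          using d by (simp add: divide_simps) (simp add: algebra_simps)
        ultimately show ?thesis by (simp add: pe prod_eq_iff)
      qed
    qed
  qed
qed

lemma lam_sing: "x \<in> sing_set U psiU psiV \<Longrightarrow> lam psiU psiV x = 0"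
  using bij_of_mu unfolding sing_set_def lam_def by blast

lemma lin_sign:
  fixes L :: "pt \<Rightarrow> real"
  assumes "linear L" "L a = 0"
  shows "L X * (fst a ^ 2 + snd a ^ 2) = L (Jrot a) * mu a X"
proof -
  have "(fst a ^ 2 + snd a ^ 2) *\<^sub>R X = (fst a * fst X + snd a * snd X) *\<^sub>R a + mu a X *\<^sub>R Jrot a"
    by (simp add: prod_eq_iff Jrot_def mu_def power2_eq_square algebra_simps)
  then have "L ((fst a ^ 2 + snd a ^ 2) *\<^sub>R X) = L ((fst a * fst X + snd a * snd X) *\<^sub>R a + mu a X *\<^sub>R Jrot a)"
    by simp
  moreover have "\<And>x y. L (x + y) = L x + L y" "\<And>c x. L (c *\<^sub>R x) = c *\<^sub>R L x"
    using assms(1) linear_iff by blast+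
  ultimately have "(fst a ^ 2 + snd a ^ 2) * L X = (fst a * fst X + snd a * snd X) * L a + mu a X * L (Jrot a)"
    by (metis real_scaleR_def)
  then show ?thesis using assms(2) by (simp add: algebra_simps)
qed

lemma lin2:
  fixes L :: "pt \<Rightarrow> 'b::real_vector"
  assumes "linear L"
  shows "L v = fst v *\<^sub>R L (1,0) + snd v *\<^sub>R L (0,1)"
proof -
  have "v = fst v *\<^sub>R (1,0) + snd v *\<^sub>R (0,1)" by (simp add: prod_eq_iff)
  then have "L v = L (fst v *\<^sub>R (1,0) + snd v *\<^sub>R (0,1))" by simp
  moreover have "\<And>x y. L (x + y) = L x + L y" "\<And>c x. L (c *\<^sub>R x) = c *\<^sub>R L x"
    using assms(1) linear_iff by blast+
  ultimately show ?thesis by metis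
qed

lemma smooth_parts:
  assumes "smooth_on f S"
  shows "continuous_on S f" "f differentiable_on S"
    "\<And>v. continuous_on S (\<lambda>x. frechet_derivative f (at x) v)"
    "\<And>v. (\<lambda>x. frechet_derivative f (at x) v) differentiable_on S"
proof -
  have c2: "Ck (Suc (Suc 0)) f S" using assms unfolding smooth_on_def by blast
  have "Ck 0 f S" using assms unfolding smooth_on_def by blast
  then show "continuous_on S f" by simp
  show "f differentiable_on S" using c2 by simp
  fix v
  show "continuous_on S (\<lambda>x. frechet_derivative f (at x) v)"
    using c2 by (simp add: differentiable_imp_continuous_on)
  show "(\<lambda>x. frechet_derivative f (at x) v) differentiable_on S" using c2 by simp
qed



lemma normsq: "(norm (x::pt))^2 = fst x ^ 2 + snd x ^ 2"
  by (cases x) (simp add: norm_Pair)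

lemma mu_scaleL: "mu (r *\<^sub>R a) b = r * mu a b" by (simp add: mu_def algebra_simps)
lemma mu_scaleR: "mu a (r *\<^sub>R b) = r * mu a b" by (simp add: mu_def algebra_simps)
lemma mu_antisym: "mu a b = - mu b a" by (simp add: mu_def)
lemma mu_Jrot: "mu a (Jrot a) = fst a ^ 2 + snd a ^ 2" by (simp add: mu_def Jrot_def power2_eq_square)

lemma sign_const_aux:
  fixes h :: "real \<Rightarrow> real"
  assumes c: "continuous_on {a<..<b} h" and nz: "\<forall>t\<in>{a<..<b}. h t \<noteq> 0"
    and x: "x \<in> {a<..<b}" and y: "y \<in> {a<..<b}" and xy: "x \<le> y"
  shows "sgn (h x) = sgn (h y)"
proof (rule ccontr)
  assume ne: "sgn (h x) \<noteq> sgn (h y)"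
  have sub: "{x..y} \<subseteq> {a<..<b}" using x y by auto
  have cc: "continuous_on {x..y} h" using continuous_on_subset[OF c sub] .
  have hx: "h x \<noteq> 0" and hy: "h y \<noteq> 0" using nz x y by auto
  have "(h x < 0 \<and> 0 < h y) \<or> (h y < 0 \<and> 0 < h x)"
    using ne hx hy by (auto simp: sgn_if split: if_splits)
  then obtain z where "x \<le> z" "z \<le> y" "h z = 0"
    using IVT'[of h x 0 y, OF _ _ xy cc] IVT2'[of h y 0 x, OF _ _ xy cc] by force
  then show False using nz sub by auto
qed

lemma sign_const:
  fixes h :: "real \<Rightarrow> real"
  assumes c: "continuous_on {a<..<b} h" and nz: "\<forall>t\<in>{a<..<b}. h t \<noteq> 0"
    and x: "x \<in> {a<..<b}" and y: "y \<in> {a<..<b}"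
  shows "sgn (h x) = sgn (h y)"
  using sign_const_aux[OF c nz x y] sign_const_aux[OF c nz y x] by linarith

theorem mainTheorem4:
  fixes U :: "pt set" and psiU psiV :: "pt \<Rightarrow> pt" and w1 w2 :: "pt \<Rightarrow> real"
    and p :: pt and g eta :: "real \<Rightarrow> pt" and \<epsilon> :: real
  assumes ctb: "coherent_tb U psiU psiV w1 w2"
    and peak: "is_peak U psiU psiV p"
    and eps: "0 < \<epsilon>"
    and g_sing: "g ` {0..<\<epsilon>} \<subseteq> sing_set U psiU psiV"
    and g0: "g 0 = p"
    and g_reg: "C1_regular_curve g \<epsilon>"
    and g_smooth: "smooth_on g {0<..<\<epsilon>}"
    and g_A2: "\<forall>t\<in>{0<..<\<epsilon>}. A2_point U psiU psiV (g t)"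
    and eta: "\<forall>t\<in>{0<..<\<epsilon>}. eta t \<noteq> 0 \<and> psi psiU psiV (g t) (eta t) = 0 \<and>
                 mu (vector_derivative g (at t)) (eta t) > 0"
  shows "\<exists>f. continuous_on {0..<\<epsilon>} f \<and>
           (\<forall>t\<in>{0<..<\<epsilon>}. f t = kappa_s psiU psiV w1 w2 g eta t * norm (psi_dot psiU psiV g t))"
proof -
  let ?I = "{0..<\<epsilon>}" and ?J = "{0<..<\<epsilon>}"
  have oU: "open U" and sU: "smooth_on psiU U" and sV: "smooth_on psiV U"
    and sw1: "smooth_on w1 U" and sw2: "smooth_on w2 U"
    using ctb unfolding coherent_tb_def by blast+
  obtain c' where c'd: "\<And>t. t \<in> ?I \<Longrightarrow> (g has_vector_derivative c' t) (at t within ?I)"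
    and c'c: "continuous_on ?I c'" and c'nz: "\<And>t. t \<in> ?I \<Longrightarrow> c' t \<noteq> 0"
    using g_reg unfolding C1_regular_curve_def by blast
  have gc: "continuous_on ?I g" using c'd continuous_on_vector_derivative by blast
  have JI: "?J \<subseteq> ?I" by auto
  have oJ: "open ?J" by simp
  have gat: "(g has_vector_derivative c' t) (at t)" if "t \<in> ?J" for t
    using has_vector_derivative_within_subset[OF c'd[of t] JI] that at_within_open[OF that oJ] by auto
  have vdg: "vector_derivative g (at t) = c' t" if "t \<in> ?J" for t
    using gat[OF that] vector_derivative_at by blast
  have gU: "g t \<in> U" if "t \<in> ?I" for t using g_sing that unfolding sing_set_def by blast
  have lam0: "lam psiU psiV (g t) = 0" if "t \<in> ?I" for t using g_sing that lam_sing by blast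
  have pU: "p \<in> U" using gU[of 0] g0 eps by simp
  have hasD: "(Xi has_derivative frechet_derivative Xi (at x)) (at x)"
    if "smooth_on Xi U" "x \<in> U" for Xi :: "pt \<Rightarrow> 'b::real_normed_vector" and x
    using smooth_parts(2)[OF that(1)] differentiable_on_eq_differentiable_at[OF oU] that(2)
      frechet_derivative_works by blast
  have linD: "linear (frechet_derivative Xi (at x))"
    if "smooth_on Xi U" "x \<in> U" for Xi :: "pt \<Rightarrow> 'b::real_normed_vector" and x
    using has_derivative_linear[OF hasD[OF that]] .
  define dl where "dl x v = mu (psiU x) (frechet_derivative psiV (at x) v) + mu (frechet_derivative psiU (at x) v) (psiV x)" for x v
  have lamD: "(lam psiU psiV has_derivative dl x) (at x)" if "x \<in> U" for x
  proof -
    have e1: "lam psiU psiV = (\<lambda>x. mu (psiU x) (psiV x))" by (rule ext) (simp add: lam_def)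
    have e2: "dl x = (\<lambda>v. mu (psiU x) (frechet_derivative psiV (at x) v) + mu (frechet_derivative psiU (at x) v) (psiV x))"
      by (rule ext) (simp add: dl_def)
    show ?thesis unfolding e1 e2
      by (rule bounded_bilinear.FDERIV[OF mu_bil hasD[OF sU that] hasD[OF sV that]])
  qed
  have dlam_eq: "dlam psiU psiV x = dl x" if "x \<in> U" for x
    using frechet_derivative_at[OF lamD[OF that]] unfolding dlam_def by simp
  have dl_lin: "linear (dl x)" if "x \<in> U" for x using has_derivative_linear[OF lamD[OF that]] .
  have contD: "continuous_on ?I (\<lambda>t. frechet_derivative Xi (at (g t)) (a t))"
    if "smooth_on Xi U" "continuous_on ?I a" for Xi :: "pt \<Rightarrow> 'b::real_normed_vector" and a
  proof -
    have e: "frechet_derivative Xi (at (g t)) (a t) = fst (a t) *\<^sub>R frechet_derivative Xi (at (g t)) (1,0)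
       + snd (a t) *\<^sub>R frechet_derivative Xi (at (g t)) (0,1)" if "t \<in> ?I" for t
      using lin2[OF linD[OF \<open>smooth_on Xi U\<close> gU[OF that]]] .
    have c1: "continuous_on ?I (\<lambda>t. frechet_derivative Xi (at (g t)) v)" for v
      by (rule continuous_on_compose2[OF smooth_parts(3)[OF \<open>smooth_on Xi U\<close>, of v] gc]) (use gU in blast)
    have "continuous_on ?I (\<lambda>t. fst (a t) *\<^sub>R frechet_derivative Xi (at (g t)) (1,0)
       + snd (a t) *\<^sub>R frechet_derivative Xi (at (g t)) (0,1))"
      by (intro continuous_intros c1 that(2))
    then show ?thesis by (rule continuous_on_eq) (simp add: e)
  qed
  have dl_tan: "dl (g t) (c' t) = 0" if "t \<in> ?J" for t
  proof -
    have tI: "t \<in> ?I" using that by auto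
    have "((lam psiU psiV \<circ> g) has_vector_derivative dl (g t) (c' t)) (at t within UNIV)"
    proof (rule vector_derivative_diff_chain_within)
      show "(g has_vector_derivative c' t) (at t within UNIV)" using gat[OF that] by simp
      show "(lam psiU psiV has_derivative dl (g t)) (at (g t) within g ` UNIV)"
        using has_derivative_at_withinI[OF lamD[OF gU[OF tI]]] .
    qed
    then have d1: "((lam psiU psiV \<circ> g) has_vector_derivative dl (g t) (c' t)) (at t)" by simp
    have d2: "((lam psiU psiV \<circ> g) has_vector_derivative 0) (at t)"
      by (rule has_vector_derivative_transform_within_open[OF has_vector_derivative_const oJ that])
        (use lam0 in auto)
    show ?thesis using vector_derivative_unique_at[OF d1 d2] .
  qed
  define P where "P = psi_dot psiU psiV g"
  have Peq: "P s = fst (c' s) *\<^sub>R psiU (g s) + snd (c' s) *\<^sub>R psiV (g s)" if "s \<in> ?J" for s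
    using that by (simp add: P_def psi_dot_def psi_def vdg)
  have c'diff: "c' differentiable (at t)" if "t \<in> ?J" for t
  proof -
    have fe: "frechet_derivative g (at s) 1 = c' s" if "s \<in> ?J" for s
    proof -
      have "(\<lambda>x. x *\<^sub>R c' s) = frechet_derivative g (at s)"
        using frechet_derivative_at gat[OF that] unfolding has_vector_derivative_def by blast
      from fun_cong[OF this, of 1] show ?thesis by simp
    qed
    have "(\<lambda>s. frechet_derivative g (at s) 1) differentiable (at t)"
      using smooth_parts(4)[OF g_smooth, of 1] differentiable_on_eq_differentiable_at[OF oJ] that by blast
    then obtain D where "((\<lambda>s. frechet_derivative g (at s) 1) has_derivative D) (at t)"
      unfolding differentiable_def by blast
    then have "(c' has_derivative D) (at t)"
      by (rule has_derivative_transform_within_open[OF _ oJ that]) (simp add: fe)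
    then show ?thesis unfolding differentiable_def by blast
  qed
  have Pvd: "(P has_vector_derivative vector_derivative P (at t)) (at t)" if "t \<in> ?J" for t
  proof -
    have tI: "t \<in> ?I" using that by auto
    have gd: "g differentiable (at t)" using gat[OF that] differentiableI_vector by blast
    have cd: "(\<lambda>s. fst (c' s)) differentiable (at t)" "(\<lambda>s. snd (c' s)) differentiable (at t)"
      using differentiable_compose[OF bounded_linear_imp_differentiable[OF bounded_linear_fst] c'diff[OF that]]
        differentiable_compose[OF bounded_linear_imp_differentiable[OF bounded_linear_snd] c'diff[OF that]]
      by auto
    have ud: "(\<lambda>s. psiU (g s)) differentiable (at t)" "(\<lambda>s. psiV (g s)) differentiable (at t)"
      using differentiable_compose[OF _ gd] hasD[OF sU gU[OF tI]] hasD[OF sV gU[OF tI]]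
      unfolding differentiable_def by blast+
    have "(\<lambda>s. fst (c' s) *\<^sub>R psiU (g s) + snd (c' s) *\<^sub>R psiV (g s)) differentiable (at t)"
      using cd ud by (intro differentiable_add differentiable_scaleR) auto
    then obtain D where "((\<lambda>s. fst (c' s) *\<^sub>R psiU (g s) + snd (c' s) *\<^sub>R psiV (g s)) has_derivative D) (at t)"
      unfolding differentiable_def by blast
    then have "(P has_derivative D) (at t)"
      by (rule has_derivative_transform_within_open[OF _ oJ that]) (use Peq in auto)
    then show ?thesis using vector_derivative_works differentiable_def by blast
  qed
  have Pnz: "P t \<noteq> 0" if "t \<in> ?J" for t
  proof
    assume P0: "P t = 0"
    have tI: "t \<in> ?I" using that by auto
    have "psi psiU psiV (g t) (c' t) = 0" using P0 that by (simp add: P_def psi_dot_def vdg)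
    moreover have "dlam psiU psiV (g t) (c' t) = 0" using dlam_eq[OF gU[OF tI]] dl_tan[OF that] by simp
    ultimately have "c' t = 0" using g_A2 that unfolding A2_point_def by blast
    then show False using c'nz tI by blast
  qed
  have muP: "mu (P s) (psiU (g s)) = 0 \<and> mu (P s) (psiV (g s)) = 0" if "s \<in> ?J" for s
  proof -
    have "lam psiU psiV (g s) = 0" using lam0 that by auto
    then have l: "fst (psiU (g s)) * snd (psiV (g s)) - snd (psiU (g s)) * fst (psiV (g s)) = 0"
      by (simp add: lam_def mu_def)
    show ?thesis using Peq[OF that] l
      by (simp add: mu_def algebra_simps)
  qed
  define h where "h t = dl (g t) (Jrot (c' t))" for t
  have hcont: "continuous_on ?J h"
  proof -
    have gIU: "g ` ?I \<subseteq> U" using gU by blast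
    have cJ: "continuous_on ?I (\<lambda>t. Jrot (c' t))" unfolding Jrot_def by (intro continuous_intros c'c)
    have cu: "continuous_on ?I (\<lambda>t. psiU (g t))" by (rule continuous_on_compose2[OF smooth_parts(1)[OF sU] gc gIU])
    have cv: "continuous_on ?I (\<lambda>t. psiV (g t))" by (rule continuous_on_compose2[OF smooth_parts(1)[OF sV] gc gIU])
    have du: "continuous_on ?I (\<lambda>t. frechet_derivative psiU (at (g t)) (Jrot (c' t)))" by (rule contD[OF sU cJ])
    have dv: "continuous_on ?I (\<lambda>t. frechet_derivative psiV (at (g t)) (Jrot (c' t)))" by (rule contD[OF sV cJ])
    have "continuous_on ?I h" unfolding h_def dl_def mu_def
      by (intro continuous_intros cu cv du dv)
    then show ?thesis using continuous_on_subset JI by blast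
  qed
  have sgn_eq: "sgn (dlam psiU psiV (g t) (eta t)) = sgn (h t) \<and> h t \<noteq> 0" if "t \<in> ?J" for t
  proof -
    have tI: "t \<in> ?I" using that by auto
    have ls: "dl (g t) (eta t) * (fst (c' t) ^ 2 + snd (c' t) ^ 2) = h t * mu (c' t) (eta t)"
      unfolding h_def by (rule lin_sign[OF dl_lin[OF gU[OF tI]] dl_tan[OF that]])
    have e: "dlam psiU psiV (g t) (eta t) = dl (g t) (eta t)" using dlam_eq[OF gU[OF tI]] by simp
    have "dlam psiU psiV (g t) (eta t) \<noteq> 0" using g_A2 eta that unfolding A2_point_def by blast
    then have d0: "dl (g t) (eta t) \<noteq> 0" using e by simp
    have mpos: "mu (c' t) (eta t) > 0" using eta that vdg[OF that] by metis
    have npos: "fst (c' t) ^ 2 + snd (c' t) ^ 2 > 0"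
      using c'nz[OF tI] by (simp add: add_pos_nonneg sum_power2_gt_zero_iff prod_eq_iff)
    have "sgn (dl (g t) (eta t) * (fst (c' t) ^ 2 + snd (c' t) ^ 2)) = sgn (h t * mu (c' t) (eta t))"
      using ls by simp
    then have "sgn (dl (g t) (eta t)) = sgn (h t)" using mpos npos by (simp add: sgn_mult)
    then show ?thesis using e d0 by (auto simp: sgn_0_0)
  qed
  obtain s0 where s0: "\<And>t. t \<in> ?J \<Longrightarrow> sgn (dlam psiU psiV (g t) (eta t)) = s0"
  proof -
    have m: "\<epsilon> / 2 \<in> ?J" using eps by auto
    have "sgn (dlam psiU psiV (g t) (eta t)) = sgn (h (\<epsilon> / 2))" if "t \<in> ?J" for t
      using sgn_eq[OF that] sign_const[OF hcont _ that m] sgn_eq by auto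
    then show ?thesis using that by blast
  qed
  define F where "F Xi t = s0 * (mu (Xi (g t)) (frechet_derivative Xi (at (g t)) (c' t)) /
     (fst (Xi (g t)) ^ 2 + snd (Xi (g t)) ^ 2) + w1 (g t) * fst (c' t) + w2 (g t) * snd (c' t))"
    for Xi :: "pt \<Rightarrow> pt" and t
  have key: "kappa_s psiU psiV w1 w2 g eta t * norm (P t) = F Xi t"
    if XiU: "Xi \<in> {psiU, psiV}" and tJ: "t \<in> ?J" and xnz: "Xi (g t) \<noteq> 0" for Xi t
  proof -
    have tI: "t \<in> ?I" using tJ by auto
    have sX: "smooth_on Xi U" using XiU sU sV by blast
    define x where "x = Xi (g t)"
    define x' where "x' = frechet_derivative Xi (at (g t)) (c' t)"
    define P' where "P' = vector_derivative P (at t)"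
    have gw: "(g has_vector_derivative c' t) (at t within UNIV)" using gat[OF tJ] by simp
    have Xw: "(Xi has_derivative frechet_derivative Xi (at (g t))) (at (g t) within g ` UNIV)"
      using has_derivative_at_withinI[OF hasD[OF sX gU[OF tI]]] .
    have xd0: "((Xi \<circ> g) has_vector_derivative frechet_derivative Xi (at (g t)) (c' t)) (at t within UNIV)"
      using vector_derivative_diff_chain_within[OF gw Xw] .
    have xd: "((\<lambda>s. Xi (g s)) has_vector_derivative x') (at t)" using xd0 by (simp add: o_def x'_def)
    have pd: "(P has_vector_derivative P') (at t)" using Pvd[OF tJ] unfolding P'_def .
    have d1: "((\<lambda>s. mu (P s) (Xi (g s))) has_vector_derivative (mu (P t) x' + mu P' (Xi (g t)))) (at t)"
      using bounded_bilinear.has_vector_derivative[OF mu_bil pd xd] .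
    have d2: "((\<lambda>s. mu (P s) (Xi (g s))) has_vector_derivative 0) (at t)"
    proof (rule has_vector_derivative_transform_within_open[OF has_vector_derivative_const oJ tJ])
      fix y assume "y \<in> ?J" then show "0 = mu (P y) (Xi (g y))" using muP XiU by auto
    qed
    have e0: "mu (P t) x' + mu P' x = 0" using vector_derivative_unique_at[OF d1 d2] x_def by simp
    have m0: "mu (P t) x = 0" using muP[OF tJ] XiU x_def by auto
    define N where "N = fst x ^ 2 + snd x ^ 2"
    have Npos: "N > 0" using xnz x_def unfolding N_def by (simp add: sum_power2_gt_zero_iff prod_eq_iff)
    define a where "a = (fst (P t) * fst x + snd (P t) * snd x) / N"
    have m0': "fst (P t) * snd x = snd (P t) * fst x" using m0 by (simp add: mu_def)
    have Pa: "P t = a *\<^sub>R x"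
    proof -
      have "fst (P t) * N = (fst (P t) * fst x + snd (P t) * snd x) * fst x"
        unfolding N_def power2_eq_square using m0' by (simp add: algebra_simps)
      moreover have "snd (P t) * N = (fst (P t) * fst x + snd (P t) * snd x) * snd x"
        unfolding N_def power2_eq_square using m0' by (simp add: algebra_simps)
      ultimately show ?thesis using Npos unfolding a_def by (simp add: prod_eq_iff field_simps)
    qed
    have a0: "a \<noteq> 0" using Pa Pnz[OF tJ] by auto
    have mPP: "mu (P t) P' = a ^ 2 * mu x x'"
    proof -
      have "mu (P t) P' = a * mu x P'" using Pa by (simp add: mu_scaleL)
      also have "\<dots> = - a * mu P' x" by (simp add: mu_antisym[of x P'])
      also have "mu P' x = - a * mu x x'" using e0 Pa by (simp add: mu_scaleL)
      finally show ?thesis by (simp add: power2_eq_square)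
    qed
    define k where "k = fst (c' t) * w1 (g t) + snd (c' t) * w2 (g t)"
    have Dt: "Dt_psi_dot psiU psiV w1 w2 g t = P' + k *\<^sub>R Jrot (P t)"
      unfolding Dt_psi_dot_def P'_def P_def k_def using vdg[OF tJ] by simp
    have nP2: "norm (P t) ^ 2 = a ^ 2 * N" using Pa unfolding normsq N_def by (simp add: power_mult_distrib algebra_simps)
    have nPpos: "norm (P t) > 0" using Pnz[OF tJ] by simp
    have mQ: "mu (P t) (Dt_psi_dot psiU psiV w1 w2 g t) = a ^ 2 * mu x x' + k * (a ^ 2 * N)"
      unfolding Dt using mPP bounded_bilinear.add_right[OF mu_bil] mu_scaleR mu_Jrot nP2 normsq
      by (simp add: mu_scaleR mu_Jrot)
    have "kappa_s psiU psiV w1 w2 g eta t * norm (P t)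
        = s0 * mu (P t) (Dt_psi_dot psiU psiV w1 w2 g t) / norm (P t) ^ 3 * norm (P t)"
      unfolding kappa_s_def P_def using s0[OF tJ] by simp
    also have "\<dots> = s0 * mu (P t) (Dt_psi_dot psiU psiV w1 w2 g t) / norm (P t) ^ 2"
      using nPpos by (simp add: power2_eq_square power3_eq_cube)
    also have "\<dots> = s0 * (mu x x' / N + k)"
      unfolding mQ nP2 using a0 Npos by (simp add: field_simps power2_eq_square)
    also have "\<dots> = F Xi t" unfolding F_def x_def x'_def N_def k_def by (simp add: algebra_simps)
    finally show ?thesis .
  qed
  have Fcont: "(F Xi \<longlongrightarrow> F Xi t0) (at t0 within ?I)"
    if XiU: "Xi \<in> {psiU, psiV}" and t0I: "t0 \<in> ?I" and xnz: "Xi (g t0) \<noteq> 0" for Xi t0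
  proof -
    have sX: "smooth_on Xi U" using XiU sU sV by blast
    have gIU: "g ` ?I \<subseteq> U" using gU by blast
    have T: "(f \<longlongrightarrow> f t0) (at t0 within ?I)" if "continuous_on ?I f" for f :: "real \<Rightarrow> 'b::topological_space"
      using that t0I unfolding continuous_on_def by blast
    have cX: "continuous_on ?I (\<lambda>t. Xi (g t))" by (rule continuous_on_compose2[OF smooth_parts(1)[OF sX] gc gIU])
    have c1: "continuous_on ?I (\<lambda>t. w1 (g t))" by (rule continuous_on_compose2[OF smooth_parts(1)[OF sw1] gc gIU])
    have c2: "continuous_on ?I (\<lambda>t. w2 (g t))" by (rule continuous_on_compose2[OF smooth_parts(1)[OF sw2] gc gIU])
    have cD: "continuous_on ?I (\<lambda>t. frechet_derivative Xi (at (g t)) (c' t))" by (rule contD[OF sX c'c])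
    have N0: "fst (Xi (g t0)) ^ 2 + snd (Xi (g t0)) ^ 2 \<noteq> 0"
      using xnz by (simp add: sum_power2_eq_zero_iff prod_eq_iff)
    show ?thesis unfolding F_def mu_def
      by (intro tendsto_intros T cX c1 c2 cD c'c N0)
  qed
  obtain Xi0 where Xi0: "Xi0 \<in> {psiU, psiV}" "Xi0 p \<noteq> 0"
  proof -
    have "psiU p \<noteq> 0 \<or> psiV p \<noteq> 0"
    proof (rule ccontr)
      assume "\<not> (psiU p \<noteq> 0 \<or> psiV p \<noteq> 0)"
      then have "range (psi psiU psiV p) = {0}" by (auto simp: psi_def)
      then have "dim (range (psi psiU psiV p)) = 0" by simp
      then show False using peak unfolding is_peak_def by simp
    qed
    then show ?thesis using that by blast
  qed
  define f where "f t = (if t = 0 then F Xi0 0 else kappa_s psiU psiV w1 w2 g eta t * norm (P t))" for t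
  have "continuous_on ?I f"
    unfolding continuous_on_def
  proof
    fix t0 assume t0I: "t0 \<in> ?I"
    obtain Xi where XiU: "Xi \<in> {psiU, psiV}" and xnz: "Xi (g t0) \<noteq> 0" and ft0: "f t0 = F Xi t0"
    proof (cases "t0 = 0")
      case True
      then show ?thesis using that[of Xi0] Xi0 g0 by (simp add: f_def)
    next
      case False
      then have tJ: "t0 \<in> ?J" using t0I by auto
      have "psiU (g t0) \<noteq> 0 \<or> psiV (g t0) \<noteq> 0" using Pnz[OF tJ] Peq[OF tJ] by auto
      then obtain Xi where "Xi \<in> {psiU, psiV}" "Xi (g t0) \<noteq> 0" by blast
      then show ?thesis using that[of Xi] key[of Xi t0] tJ False by (simp add: f_def)
    qed
    have sX: "smooth_on Xi U" using XiU sU sV by blast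
    have gIU: "g ` ?I \<subseteq> U" using gU by blast
    have cX: "continuous_on ?I (\<lambda>t. Xi (g t))" by (rule continuous_on_compose2[OF smooth_parts(1)[OF sX] gc gIU])
    have "((\<lambda>t. Xi (g t)) \<longlongrightarrow> Xi (g t0)) (at t0 within ?I)" using cX t0I unfolding continuous_on_def by blast
    then have ev1: "eventually (\<lambda>t. Xi (g t) \<noteq> 0) (at t0 within ?I)"
      using tendsto_imp_eventually_ne xnz by blast
    have ev2: "eventually (\<lambda>t. t \<in> ?I \<and> t \<noteq> t0) (at t0 within ?I)"
      unfolding eventually_at_filter by simp
    have ev3: "eventually (\<lambda>t. t0 = 0 \<or> 0 < t) (at t0 within ?I)"
    proof (cases "t0 = 0")
      case True then show ?thesis by simp
    next
      case False
      then have "0 < t0" using t0I by auto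
      then have "eventually (\<lambda>t. 0 < t) (at t0 within ?I)"
        using order_tendstoD(1)[OF tendsto_ident_at] by blast
      then show ?thesis by (rule eventually_mono) simp
    qed
    have "eventually (\<lambda>t. F Xi t = f t) (at t0 within ?I)"
      using ev1 ev2 ev3
    proof eventually_elim
      case (elim t)
      then have tJ: "t \<in> ?J" by auto
      then show ?case using key[OF XiU tJ elim(1)] by (simp add: f_def)
    qed
    then show "(f \<longlongrightarrow> f t0) (at t0 within ?I)"
      using Lim_transform_eventually[OF Fcont[OF XiU t0I xnz]] ft0 by simp
  qed
  moreover have "\<forall>t\<in>?J. f t = kappa_s psiU psiV w1 w2 g eta t * norm (psi_dot psiU psiV g t)"
    by (simp add: f_def P_def)
  ultimately show ?thesis by blast
qed

end
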